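(* Let $T$ be a commutative ring with identity, $S$ a unital subring and $I$ a nil ideal of $T$ with $T=S+I$ and $S\cap I=\{0\}$. Then $T$ is roughly complemented if and only if for each $s\in S$ and $i\in I$ there are $t\in S$ and $j\in I$ such that $st=0$, $s+t\in\mathrm{areg}(S)$, and $(s+i)j=it$. In particular, if $T$ is roughly complemented, then $S$ is roughly complemented.
   Context: For a ring $A$: $\mathfrak{N}(A)$ is the nilradical, $\mathrm{reg}(A)$ the regular elements, $\mathrm{areg}(A)=\{x: x+\mathfrak{N}(A)\in\mathrm{reg}(A/\mathfrak{N}(A))\}$. An element $a\in A$ is roughly complemented if there is $b\in A$ with $ab=0$ and $a+b\in\mathrm{areg}(A)$; $A$ is roughly complemented if every element is. *)

theory Defs
  imports Main
begin

text \<open>Rings are subrings A (given by their carrier set) of an ambient commutative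
ring, the type 'a :: comm_ring_1.  The whole ring T is UNIV.\<close>

definition is_subring :: "'a::comm_ring_1 set \<Rightarrow> bool" where
  "is_subring A \<longleftrightarrow> 1 \<in> A \<and> (\<forall>x\<in>A. \<forall>y\<in>A. x + y \<in> A \<and> x - y \<in> A \<and> x * y \<in> A)"

definition is_ideal :: "'a::comm_ring_1 set \<Rightarrow> bool" where
  "is_ideal I \<longleftrightarrow> 0 \<in> I \<and> (\<forall>x\<in>I. \<forall>y\<in>I. x + y \<in> I) \<and> (\<forall>x\<in>I. - x \<in> I)
     \<and> (\<forall>r. \<forall>x\<in>I. r * x \<in> I)"

definition is_nil :: "'a::comm_ring_1 set \<Rightarrow> bool" where
  "is_nil I \<longleftrightarrow> (\<forall>x\<in>I. \<exists>n::nat. x ^ n = 0)"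

definition nilradical :: "'a::comm_ring_1 set \<Rightarrow> 'a set" where
  "nilradical A = {x \<in> A. \<exists>n::nat. x ^ n = 0}"

text \<open>areg(A): x + N(A) is a regular element (non-zero-divisor) of A/N(A).\<close>
definition areg :: "'a::comm_ring_1 set \<Rightarrow> 'a set" where
  "areg A = {x \<in> A. \<forall>y\<in>A. x * y \<in> nilradical A \<longrightarrow> y \<in> nilradical A}"

definition roughly_complemented :: "'a::comm_ring_1 set \<Rightarrow> bool" where
  "roughly_complemented A \<longleftrightarrow> (\<forall>a\<in>A. \<exists>b\<in>A. a * b = 0 \<and> a + b \<in> areg A)"

end

theory Submission
  imports Defs
begin

definition nilp :: "'a::comm_ring_1 \<Rightarrow> bool" where
  "nilp x \<longleftrightarrow> (\<exists>n::nat. x ^ n = 0)"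

lemma nilp_term:
  fixes a b :: "'a::comm_ring_1"
  assumes m: "a ^ m = 0" and n: "b ^ n = 0"
  shows "of_nat ((m+n) choose k) * a^k * b^(m+n-k) = 0"
proof (cases "k \<ge> m")
  case True
  then have "k = m + (k - m)" by simp
  then have "a ^ k = a ^ m * a ^ (k - m)" by (metis power_add)
  then show ?thesis using m by simp
next
  case False
  then have "m+n-k = n + (m - k)" by simp
  then have "b ^ (m+n-k) = b ^ n * b ^ (m - k)" by (metis power_add)
  then show ?thesis using n by simp
qed

lemma nilp_add:
  fixes a b :: "'a::comm_ring_1"
  assumes "nilp a" "nilp b" shows "nilp (a + b)"
proof -
  obtain m n where m: "a ^ m = 0" and n: "b ^ n = 0" using assms unfolding nilp_def by blast
  have "(a + b) ^ (m + n) = (\<Sum>k\<le>m+n. of_nat ((m+n) choose k) * a^k * b^(m+n-k))"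
    by (rule binomial_ring)
  also have "\<dots> = 0"
    by (rule sum.neutral) (use nilp_term[OF m n] in blast)
  finally show ?thesis unfolding nilp_def by blast
qed

lemma nilp_uminus: "nilp (x::'a::comm_ring_1) \<Longrightarrow> nilp (- x)"
  unfolding nilp_def proof (elim exE)
  fix n assume "x ^ n = 0" then show "\<exists>n. (- x) ^ n = 0" proof (intro exI[of _ n])
    have "(- x) ^ n = (- 1) ^ n * x ^ n" by (rule power_minus)
    then show "(- x) ^ n = 0" using \<open>x ^ n = 0\<close> by simp
  qed
qed

lemma nilp_diff: "nilp (a::'a::comm_ring_1) \<Longrightarrow> nilp b \<Longrightarrow> nilp (a - b)"
proof -
  assume "nilp a" "nilp b"
  then have "nilp (a + - b)" using nilp_add nilp_uminus by blast
  then show ?thesis by (simp only: diff_conv_add_uminus)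
qed

lemma nilp_mult: "nilp (a::'a::comm_ring_1) \<Longrightarrow> nilp (a * b)"
  unfolding nilp_def proof (elim exE)
  fix n assume "a ^ n = 0" then show "\<exists>n. (a * b) ^ n = 0" proof (intro exI[of _ n])
    have "(a * b) ^ n = a ^ n * b ^ n" by (rule power_mult_distrib)
    then show "(a * b) ^ n = 0" using \<open>a ^ n = 0\<close> by simp
  qed
qed

theorem mainTheorem17:
  fixes S I :: "'a::comm_ring_1 set"
  assumes "is_subring S"
    and "is_ideal I" and "is_nil I"
    and "\<forall>x. \<exists>s\<in>S. \<exists>i\<in>I. x = s + i"
    and "S \<inter> I = {0}"
  shows "(roughly_complemented (UNIV :: 'a set) \<longleftrightarrow>
           (\<forall>s\<in>S. \<forall>i\<in>I. \<exists>t\<in>S. \<exists>j\<in>I.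
              s * t = 0 \<and> s + t \<in> areg S \<and> (s + i) * j = i * t))
       \<and> (roughly_complemented (UNIV :: 'a set) \<longrightarrow> roughly_complemented S)"
proof -
  note sub = assms(1)[unfolded is_subring_def]
  note idl = assms(2)[unfolded is_ideal_def]
  have Sadd: "x + y \<in> S" "x - y \<in> S" "x * y \<in> S" if "x \<in> S" "y \<in> S" for x y
    using sub that by auto
  have S0: "0 \<in> S" using Sadd(2)[of 1 1] sub by simp
  have Iadd: "x + y \<in> I" if "x \<in> I" "y \<in> I" for x y using idl that by auto
  have Ineg: "- x \<in> I" if "x \<in> I" for x using idl that by auto
  have Idiff: "x - y \<in> I" if "x \<in> I" "y \<in> I" for x y
    using Iadd[OF that(1) Ineg[OF that(2)]] by simp
  have Imul: "r * x \<in> I" "x * r \<in> I" if "x \<in> I" for x r using idl that by (auto simp: mult.commute)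
  have I0: "0 \<in> I" using idl by simp
  have Inil: "nilp x" if "x \<in> I" for x using assms(3) that unfolding is_nil_def nilp_def by blast
  have uniq: "s1 = s2 \<and> i1 = i2" if "s1 \<in> S" "s2 \<in> S" "i1 \<in> I" "i2 \<in> I" "s1 + i1 = s2 + i2" for s1 s2 i1 i2
  proof -
    have "s1 - s2 = i2 - i1" using that(5) by (simp add: algebra_simps)
    moreover have "s1 - s2 \<in> S" "i2 - i1 \<in> I" using that Sadd Idiff by auto
    ultimately have "s1 - s2 \<in> S \<inter> I" by simp
    then have "s1 - s2 = 0" using assms(5) by auto
    then show ?thesis using that(5) by simp
  qed
  have nilU: "nilradical (UNIV::'a set) = {x. nilp x}" unfolding nilradical_def nilp_def by auto
  have nilS: "nilradical S = {x \<in> S. nilp x}" unfolding nilradical_def nilp_def by auto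
  have aregT: "s + i \<in> areg UNIV \<longleftrightarrow> s \<in> areg S" if s: "s \<in> S" and i: "i \<in> I" for s i
  proof
    assume h: "s + i \<in> areg UNIV"
    show "s \<in> areg S" unfolding areg_def nilS
    proof (rule CollectI, rule conjI[OF s], intro ballI impI)
      fix y assume y: "y \<in> S" and "s * y \<in> {x \<in> S. nilp x}"
      then have "nilp (s * y)" by simp
      moreover have "nilp (i * y)" using Inil[OF Imul(2)[OF i]] .
      ultimately have "nilp (s * y + i * y)" by (rule nilp_add)
      then have "nilp ((s + i) * y)" by (simp add: distrib_right)
      then have "(s + i) * y \<in> nilradical UNIV" unfolding nilU by simp
      then have "y \<in> nilradical UNIV" using h unfolding areg_def by blast
      then have "nilp y" unfolding nilU by simp
      then show "y \<in> {x \<in> S. nilp x}" using y by simp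
    qed
  next
    assume h: "s \<in> areg S"
    show "s + i \<in> areg UNIV" unfolding areg_def nilU
    proof (rule CollectI, rule conjI[OF UNIV_I], intro ballI impI)
      fix y assume "(s + i) * y \<in> {x. nilp x}"
      then have ny: "nilp ((s + i) * y)" by simp
      obtain s' i' where s': "s' \<in> S" and i': "i' \<in> I" and y: "y = s' + i'" using assms(4) by blast
      have E: "(s + i) * y = s * s' + (s * i' + i * y)" using y by (simp add: algebra_simps)
      have X: "s * i' + i * y \<in> I" using Iadd[OF Imul(1)[OF i'] Imul(2)[OF i]] .
      have SS: "s * s' = (s + i) * y - (s * i' + i * y)" using E by simp
      have "nilp (s * s')" by (subst SS) (rule nilp_diff[OF ny Inil[OF X]])
      then have "s * s' \<in> nilradical S" unfolding nilS using Sadd(3)[OF s s'] by simp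
      then have "s' \<in> nilradical S" using h s' unfolding areg_def by blast
      then have "nilp s'" unfolding nilS by simp
      then show "y \<in> {x. nilp x}" using y nilp_add[OF _ Inil[OF i']] by auto
    qed
  qed
  have eq: "roughly_complemented (UNIV :: 'a set) \<longleftrightarrow>
           (\<forall>s\<in>S. \<forall>i\<in>I. \<exists>t\<in>S. \<exists>j\<in>I.
              s * t = 0 \<and> s + t \<in> areg S \<and> (s + i) * j = i * t)"
  proof
    assume rc: "roughly_complemented (UNIV :: 'a set)"
    show "\<forall>s\<in>S. \<forall>i\<in>I. \<exists>t\<in>S. \<exists>j\<in>I. s * t = 0 \<and> s + t \<in> areg S \<and> (s + i) * j = i * t"
    proof (intro ballI)
      fix s i assume s: "s \<in> S" and i: "i \<in> I"
      obtain b where b0: "(s + i) * b = 0" and ba: "(s + i) + b \<in> areg UNIV"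
        using rc unfolding roughly_complemented_def by blast
      obtain t j' where t: "t \<in> S" and j': "j' \<in> I" and b: "b = t + j'" using assms(4) by blast
      have "(s + t) + (i + j') \<in> areg UNIV" using ba b by (simp add: algebra_simps)
      then have st: "s + t \<in> areg S" using aregT[OF Sadd(1)[OF s t] Iadd[OF i j']] by blast
      have e: "s * t + (s * j' + i * t + i * j') = 0 + 0" using b0 b by (simp add: algebra_simps)
      have "s * j' + i * t + i * j' \<in> I" using Iadd[OF Iadd[OF Imul(1)[OF j'] Imul(2)[OF i]] Imul(2)[OF i]] .
      then have u: "s * t = 0 \<and> s * j' + i * t + i * j' = 0"
        using uniq[OF Sadd(3)[OF s t] S0 _ I0 e] by blast
      have "(s * j' + i * j') + i * t = 0" using u by (simp add: ac_simps)
      then have "s * j' + i * j' = - (i * t)" by (simp add: eq_neg_iff_add_eq_0)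
      moreover have "(s + i) * (- j') = - (s * j' + i * j')" by (simp add: algebra_simps)
      ultimately have "(s + i) * (- j') = i * t" by simp
      then show "\<exists>t\<in>S. \<exists>j\<in>I. s * t = 0 \<and> s + t \<in> areg S \<and> (s + i) * j = i * t"
        using t Ineg[OF j'] u st by blast
    qed
  next
    assume h: "\<forall>s\<in>S. \<forall>i\<in>I. \<exists>t\<in>S. \<exists>j\<in>I. s * t = 0 \<and> s + t \<in> areg S \<and> (s + i) * j = i * t"
    show "roughly_complemented (UNIV :: 'a set)" unfolding roughly_complemented_def
    proof (intro ballI)
      fix a :: 'a
      obtain s i where s: "s \<in> S" and i: "i \<in> I" and a: "a = s + i" using assms(4) by blast
      obtain t j where t: "t \<in> S" and j: "j \<in> I" and st0: "s * t = 0" and sa: "s + t \<in> areg S"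
        and e: "(s + i) * j = i * t" using h s i by blast
      have "a * (t - j) = 0" using a st0 e by (simp add: algebra_simps)
      moreover have A1: "a + (t - j) = (s + t) + (i - j)" using a by (simp add: algebra_simps)
      moreover have A2: "(s + t) + (i - j) \<in> areg UNIV" using aregT[OF Sadd(1)[OF s t] Idiff[OF i j]] sa by blast
      ultimately have "a * (t - j) = 0 \<and> a + (t - j) \<in> areg UNIV" by (simp only: A1 A2 simp_thms)
      then show "\<exists>b\<in>UNIV. a * b = 0 \<and> a + b \<in> areg UNIV" by blast
    qed
  qed
  have "roughly_complemented S" if rc: "roughly_complemented (UNIV :: 'a set)"
    unfolding roughly_complemented_def
  proof
    fix s assume s: "s \<in> S"
    obtain t j where "t \<in> S" "s * t = 0" "s + t \<in> areg S"
      using eq rc s I0 by blast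
    then show "\<exists>b\<in>S. s * b = 0 \<and> s + b \<in> areg S" by blast
  qed
  with eq show ?thesis by blast
qed

end
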